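(* Let $X$ be an integral regular projective curve of genus $g$ over $\mathbb{F}_q$ and $\mathbf{n}_{m-1}=(n_0,\dots,n_{m-1})$ a tuple of positive integers. Assume that the $\mathbf{n}_{m-1}$-derived alpha invariants $\alpha^{(\mathbf{n}_{m-1})}_X(\ell)$ ($\ell=0,\dots,g-1$) and the beta invariant $\beta^{(\mathbf{n}_{m-1})}_X$ are all strictly positive. Then for every positive integer $k$, $\widehat\zeta^{(\mathbf{n}_{m-1})}_X(k)>0$ and $\widehat v_k=\prod_{j=1}^k\widehat\zeta^{(\mathbf{n}_{m-1})}_X(j)>0$.
   Context: Let $\zeta_X(s)=\sum_{D\ge 0}N(D)^{-s}$ be the Artin zeta function of $X$ ($D$ running over effective divisors) and $\widehat\zeta_X(s)=q^{s(g-1)}\zeta_X(s)$ the complete Artin zeta function, a rational function of $q^{-s}$. Derived zeta functions are defined recursively. For the empty tuple $\mathbf{n}_{-1}=()$ put $q_{\mathbf{n}_{-1}}=q$, $T_{\mathbf{n}_{-1}}=q^{-s}$, $\widehat\zeta^{(\mathbf{n}_{-1})}_X=\widehat\zeta_X$. For a tuple $\mathbf{n}_m=(n_0,\dots,n_m)$ of positive integers ($m\ge 0$) put $\mathbf{n}_{m-1}=(n_0,\dots,n_{m-1})$, $q_{\mathbf{n}_m}=q^{n_0n_1\cdots n_m}$, $T_{\mathbf{n}_m}=q^{-n_0n_1\cdots n_m s}$. Writing $\widehat Z^{(\mathbf{n}_{m-1})}_X(T_{\mathbf{n}_{m-1}}):=\widehat\zeta^{(\mathbf{n}_{m-1})}_X(s)$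 (a rational function of $T_{\mathbf{n}_{m-1}}$), set $\widehat\zeta^{(\mathbf{n}_{m-1})}_X(1):=\operatorname{Res}_{T_{\mathbf{n}_{m-1}}=1}\widehat Z^{(\mathbf{n}_{m-1})}_X(T_{\mathbf{n}_{m-1}})$ and for integers $N\ge 1$, $\widehat v_N:=\prod_{k=1}^{N}\widehat\zeta^{(\mathbf{n}_{m-1})}_X(k)$. Then $$\widehat\zeta^{(\mathbf{n}_m)}_X(s)=q_{\mathbf{n}_{m-1}}^{\binom{n_m}{2}(g-1)}\sum_{a=1}^{n_m}\Biggl(\sum_{\substack{k_1,\dots,k_p>0\\k_1+\cdots+k_p=n_m-a}}\frac{\widehat v_{k_1}\cdots\widehat v_{k_p}}{\prod_{j=1}^{p-1}(1-q_{\mathbf{n}_{m-1}}^{k_j+k_{j+1}})}\cdot\frac{1}{1-q_{\mathbf{n}_{m-1}}^{n_ms-n_m+a+k_p}}\Biggr)\widehat\zeta^{(\mathbf{n}_{m-1})}_X(n_ms-n_m+a)\Biggl(\sum_{\substack{l_1,\dots,l_r>0\\l_1+\cdots+l_r=a-1}}\frac{1}{1-q_{\mathbf{n}_{m-1}}^{-n_ms+n_m-a+1+l_1}}\cdot\frac{\widehat v_{l_1}\cdots\widehat v_{l_r}}{\prod_{j=1}^{r-1}(1-q_{\mathbf{n}_{m-1}}^{l_j+l_{j+1}})}\Biggr),$$ where the inner sums run over ordered tuples of positive integers (of any length) with the indicated sum, and an inner sum over tuples summing to $0$ is defined to be $1$. (For $m=0$ this is the rank $n_0$ non-abelian zeta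 function.) For a tuple $\mathbf{n}$, with $Q=q_{\mathbf{n}}$, $T=T_{\mathbf{n}}$, the derived alpha invariants $\alpha^{(\mathbf{n})}_X(\ell)$ ($0\le\ell\le g-1$) and beta invariant $\beta^{(\mathbf{n})}_X$ are the numbers for which $$\widehat Z^{(\mathbf{n})}_X(T)=\sum_{\ell=0}^{g-2}\alpha^{(\mathbf{n})}_X(\ell)\bigl(T^{\ell-(g-1)}+Q^{(g-1)-\ell}T^{(g-1)-\ell}\bigr)+\alpha^{(\mathbf{n})}_X(g-1)+\frac{(Q-1)T\beta^{(\mathbf{n})}_X}{(1-T)(1-QT)}$$ (such a representation exists); in particular $\beta^{(\mathbf{n})}_X=\operatorname{Res}_{T=1}\widehat Z^{(\mathbf{n})}_X(T)$. *)

theory Defs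
  imports "HOL-Complex_Analysis.Complex_Analysis" "HOL-Computational_Algebra.Primes"
begin

text \<open>The complete derived zeta function written through its alpha and beta invariants,
as a (complex) rational function of T.  Q is q_n, g the genus, al the alpha invariants
(al l for l = 0..g-1), be the beta invariant.\<close>
definition Zhat_ab :: "real \<Rightarrow> nat \<Rightarrow> (nat \<Rightarrow> real) \<Rightarrow> real \<Rightarrow> complex \<Rightarrow> complex" where
  "Zhat_ab Q g al be T =
     (\<Sum>l<g - 1. complex_of_real (al l) *
        (T powi (int l - (int g - 1)) + complex_of_real Q ^ (g - 1 - l) * T ^ (g - 1 - l)))
     + complex_of_real (al (g - 1))
     + (complex_of_real Q - 1) * T * complex_of_real be
         / ((1 - T) * (1 - complex_of_real Q * T))"

text \<open>Special values: zeta(1) is the residue at T = 1, zeta(k) for k >= 2 is the value at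
s = k, i.e. at T = Q^(-k).\<close>
definition zeta_val :: "(complex \<Rightarrow> complex) \<Rightarrow> real \<Rightarrow> nat \<Rightarrow> complex" where
  "zeta_val Z Q k = (if k = 1 then residue Z 1 else Z (complex_of_real (inverse (Q ^ k))))"

end

theory Submission
  imports Defs
begin

lemma resid:
  fixes Q :: real and g :: nat and al :: "nat \<Rightarrow> real" and be :: real
  assumes Q2: "Q \<ge> 2"
  shows "residue (Zhat_ab Q g al be) 1 = complex_of_real be"
proof -
  define s :: "complex set" where "s = ball 1 (1/2)"
  define F where "F = (\<lambda>T::complex. (\<Sum>l<g - 1. complex_of_real (al l) *
        (T powi (int l - (int g - 1)) + complex_of_real Q ^ (g - 1 - l) * T ^ (g - 1 - l)))
     + complex_of_real (al (g - 1)))"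
  define G where "G = (\<lambda>T::complex. - ((complex_of_real Q - 1) * T * complex_of_real be)
         / (1 - complex_of_real Q * T))"
  have eq: "Zhat_ab Q g al be = (\<lambda>w. F w + G w / (w - 1))"
  proof
    fix w :: complex
    have "(complex_of_real Q - 1) * w * complex_of_real be / ((1 - w) * (1 - complex_of_real Q * w))
        = G w / (w - 1)"
    proof -
      have e: "(1 - w) * (1 - complex_of_real Q * w) = - ((w - 1) * (1 - complex_of_real Q * w))" by (simp add: algebra_simps)
      show ?thesis unfolding G_def e divide_minus_right divide_divide_eq_left
        by (simp add: mult.commute)
    qed
    then show "Zhat_ab Q g al be w = F w + G w / (w - 1)"
      unfolding Zhat_ab_def F_def by simp
  qed
  have os: "open s" and ins: "1 \<in> s" unfolding s_def by auto
  have n0: "0 \<notin> s" unfolding s_def by (auto simp: dist_norm)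
  have nQ: "1 - complex_of_real Q * w \<noteq> 0" if "w \<in> s" for w
  proof
    assume h: "1 - complex_of_real Q * w = 0"
    then have "w = complex_of_real (1/Q)" using Q2 by (auto simp: field_simps)
    moreover have "dist 1 (complex_of_real (1/Q)) \<ge> 1/2"
    proof -
      have "dist 1 (complex_of_real (1/Q)) = dist (1::real) (1/Q)"
        by (metis dist_complex_def dist_real_def norm_of_real of_real_1 of_real_diff)
      also have "\<dots> = 1 - 1/Q" using Q2 by (simp add: dist_real_def)
      also have "\<dots> \<ge> 1/2" using Q2 by (simp add: field_simps)
      finally show ?thesis .
    qed
    ultimately show False using that unfolding s_def by auto
  qed
  have Fh: "F holomorphic_on s"
    unfolding F_def using n0
    by (intro holomorphic_intros) auto
  have Gh: "G holomorphic_on s"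
    unfolding G_def using nQ
    by (intro holomorphic_intros) auto
  have G2: "(\<lambda>w. G w / (w - 1)) holomorphic_on s - {1}"
    using Gh by (intro holomorphic_intros) (auto intro: holomorphic_on_subset)
  have "residue (Zhat_ab Q g al be) 1 = residue F 1 + residue (\<lambda>w. G w / (w - 1)) 1"
    unfolding eq
    by (rule residue_add[OF os ins]) (use Fh G2 in \<open>auto intro: holomorphic_on_subset\<close>)
  also have "residue F 1 = 0" by (rule residue_holo[OF os ins Fh])
  also have "residue (\<lambda>w. G w / (w - 1)) 1 = G 1" by (rule residue_simple[OF os ins Gh])
  also have "G 1 = complex_of_real be"
  proof -
    have "1 - complex_of_real Q \<noteq> 0" using Q2
      by (metis nQ ins mult.right_neutral)
    then show ?thesis unfolding G_def by (simp add: field_simps)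
  qed
  finally show ?thesis by simp
qed


lemma valreal:
  fixes Q t :: real and g :: nat and al :: "nat \<Rightarrow> real" and be :: real
  assumes Q2: "Q \<ge> 2" and t0: "0 < t" and t1: "Q * t < 1"
    and al_pos: "\<forall>l\<le>g - 1. al l > 0" and be_pos: "be > 0"
  shows "Zhat_ab Q g al be (complex_of_real t) \<in> \<real> \<and> Re (Zhat_ab Q g al be (complex_of_real t)) > 0"
proof -
  define R where "R = (\<Sum>l<g - 1. al l * (t powi (int l - (int g - 1)) + Q ^ (g - 1 - l) * t ^ (g - 1 - l)))
     + al (g - 1) + (Q - 1) * t * be / ((1 - t) * (1 - Q * t))"
  have eq: "Zhat_ab Q g al be (complex_of_real t) = complex_of_real R"
    unfolding Zhat_ab_def R_def by simp
  have "1 * t < Q * t" using Q2 t0 by (intro mult_strict_right_mono) auto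
  then have tl1: "t < 1" using t1 by simp
  have Qp: "Q > 0" using Q2 by simp
  have trm: "0 \<le> al l * (t powi (int l - (int g - 1)) + Q ^ (g - 1 - l) * t ^ (g - 1 - l))"
    if "l \<in> {..<g-1}" for l
  proof -
    have "al l > 0" using al_pos that by simp
    moreover have "t powi (int l - (int g - 1)) > 0" using t0 by simp
    moreover have "Q ^ (g - 1 - l) * t ^ (g - 1 - l) > 0" using t0 Qp by simp
    ultimately show ?thesis by simp
  qed
  have s: "(\<Sum>l<g - 1. al l * (t powi (int l - (int g - 1)) + Q ^ (g - 1 - l) * t ^ (g - 1 - l))) \<ge> 0"
    by (rule sum_nonneg) (rule trm)
  have a: "al (g - 1) > 0" using al_pos by auto
  have b: "(Q - 1) * t * be / ((1 - t) * (1 - Q * t)) > 0"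
    using Q2 t0 t1 tl1 be_pos by (intro divide_pos_pos mult_pos_pos) auto
  have "R > 0" unfolding R_def using s a b by linarith
  then show ?thesis unfolding eq by simp
qed

lemma prod_pos_real:
  fixes z :: "nat \<Rightarrow> complex"
  assumes "\<And>j. j \<in> A \<Longrightarrow> z j \<in> \<real> \<and> Re (z j) > 0" and "finite A"
  shows "(\<Prod>j\<in>A. z j) \<in> \<real> \<and> Re (\<Prod>j\<in>A. z j) > 0"
proof -
  have "\<And>j. j \<in> A \<Longrightarrow> z j = complex_of_real (Re (z j))"
    using assms(1) of_real_Re by metis
  then have "(\<Prod>j\<in>A. z j) = (\<Prod>j\<in>A. complex_of_real (Re (z j)))"
    by (rule prod.cong[OF refl])
  also have "\<dots> = complex_of_real (\<Prod>j\<in>A. Re (z j))" by simp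
  finally have eq: "(\<Prod>j\<in>A. z j) = complex_of_real (\<Prod>j\<in>A. Re (z j))" .
  have pos: "(\<Prod>j\<in>A. Re (z j)) > 0" using assms by (intro prod_pos) auto
  show ?thesis using pos unfolding eq Re_complex_of_real by (blast intro: Reals_of_real)
qed

theorem lemma2p9:
  fixes q g :: nat and ns :: "nat list" and al :: "nat \<Rightarrow> real" and be :: real
  assumes q_pp: "\<exists>p r. prime p \<and> r > 0 \<and> q = p ^ r"
    and ns_pos: "\<forall>n\<in>set ns. n > 0"
    and g_pos: "g \<ge> 1"
    and al_pos: "\<forall>l\<le>g - 1. al l > 0"
    and be_pos: "be > 0"
  shows "\<forall>k::nat. k \<ge> 1 \<longrightarrow>
     (let Z = Zhat_ab (real (q ^ prod_list ns)) g al be;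
          zv = zeta_val Z (real (q ^ prod_list ns))
      in (zv k \<in> \<real> \<and> Re (zv k) > 0) \<and>
         ((\<Prod>j=1..k. zv j) \<in> \<real> \<and> Re (\<Prod>j=1..k. zv j) > 0))"
proof -
  define Q where "Q = real (q ^ prod_list ns)"
  have q2: "q \<ge> 2"
  proof -
    obtain p r where "prime p" "r > 0" "q = p ^ r" using q_pp by blast
    then have p2: "p \<ge> 2" using prime_ge_2_nat by blast
    have "p ^ 1 \<le> p ^ r" using p2 \<open>r > 0\<close> by (intro power_increasing) auto
    note p2 this
    then show ?thesis using \<open>q = p ^ r\<close> by simp
  qed
  have N: "prod_list ns \<ge> 1"
    using ns_pos by (induction ns) auto
  have "q ^ 1 \<le> q ^ prod_list ns" using q2 N by (intro power_increasing) auto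
  then have "2 \<le> q ^ prod_list ns" using q2 by simp
  then have Q2: "Q \<ge> 2" unfolding Q_def by (metis of_nat_le_iff of_nat_numeral)
  have one: "zv k \<in> \<real> \<and> Re (zv k) > 0" if "k \<ge> 1" and zvd: "zv = zeta_val (Zhat_ab Q g al be) Q" for k zv
  proof (cases "k = 1")
    case True
    then show ?thesis unfolding zvd zeta_val_def using resid[OF Q2] be_pos by simp
  next
    case False
    then have k2: "k \<ge> 2" using that by simp
    define t where "t = inverse (Q ^ k)"
    have t0: "t > 0" unfolding t_def using Q2 by simp
    have "Q ^ 2 \<le> Q ^ k" using Q2 k2 by (intro power_increasing) auto
    then have "Q * Q \<le> Q ^ k" by (simp add: power2_eq_square)
    have Qp: "Q > 0" using Q2 by simp
    have "Q * t = Q / Q ^ k" by (simp add: t_def divide_inverse)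
    also have "\<dots> \<le> Q / (Q * Q)" using \<open>Q * Q \<le> Q ^ k\<close> Qp
      by (intro divide_left_mono) auto
    also have "\<dots> = 1 / Q" using Qp by simp
    also have "\<dots> < 1" using Q2 by simp
    finally have "Q * t < 1" .
    then show ?thesis unfolding zvd zeta_val_def using False valreal[OF Q2 t0 _ al_pos be_pos]
      by (simp add: t_def)
  qed
  show ?thesis
  proof (intro allI impI)
    fix k :: nat assume k1: "k \<ge> 1"
    define zv where "zv = zeta_val (Zhat_ab Q g al be) Q"
    have "zv k \<in> \<real> \<and> Re (zv k) > 0" using one k1 zv_def by blast
    moreover have "(\<Prod>j=1..k. zv j) \<in> \<real> \<and> Re (\<Prod>j=1..k. zv j) > 0"
    proof (rule prod_pos_real)
      fix j assume "j \<in> {1..k}"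
      then show "zv j \<in> \<real> \<and> Re (zv j) > 0" using one[of j zv] zv_def by simp
    qed simp
    ultimately show "let Z = Zhat_ab (real (q ^ prod_list ns)) g al be;
          zv = zeta_val Z (real (q ^ prod_list ns))
      in (zv k \<in> \<real> \<and> Re (zv k) > 0) \<and>
         ((\<Prod>j=1..k. zv j) \<in> \<real> \<and> Re (\<Prod>j=1..k. zv j) > 0)"
      unfolding Let_def zv_def Q_def by simp
  qed
qed

end
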